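(* Let $h_0>0$, $U>0$, $k\ne0$, and let $A\in\mathfrak A_X$ (regarded as an operator on $\mathcal H^{\rm hf}_\Lambda$) have $D_\Lambda$-grade $k$, with $|k|U>h_0|X|$. Then $h\mapsto\mathcal I_h(A)$ is analytic in a neighbourhood of $[-h_0,h_0]$, and for $|h|\le h_0$, \[ \partial_h\mathcal I_h(A)=\mathcal I_h\bigl(\mathrm{ad}_{M_\Lambda}(\mathcal I_h(A))\bigr),\qquad \|\partial_h\mathcal I_h(A)\|\le\frac{|X|}{(|k|U-|h||X|)^2}\|A\|\le\frac{|X|}{(|k|U-h_0|X|)^2}\|A\|. \]
   Context: $\Lambda=(\mathbb Z/L\mathbb Z)^d$, $L\in2\mathbb N$; fermionic Fock space over $\ell^2(\Lambda)\otimes\mathbb C^2$ with CAR operators $c_{x\sigma}$, $n_{x\sigma}=c^*_{x\sigma}c_{x\sigma}$, $n_x=n_{x\uparrow}+n_{x\downarrow}$; $\mathcal H^{\rm hf}_\Lambda=\ker(\sum_xn_x-|\Lambda|)$; $D_\Lambda=\sum_xn_{x\uparrow}n_{x\downarrow}$; $\eta_x=(-1)^{x_1+\dots+x_d}$, $M_\Lambda=\sum_x\eta_x\frac12(n_{x\uparrow}-n_{x\downarrow})$; $\mathfrak A_X$ the algebra generated by $c_{x\sigma},c^*_{x\sigma}$, $x\in X$; $\mathrm{ad}_S(A)=[S,A]$. "Grade $k$" means $A=\sum_mP_{m+k}AP_m$ with $P_m$ the spectral projection of $D_\Lambda$ on $\mathcal H^{\rm hf}_\Lambda$ at eigenvalue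 $m$. For such $A$ and $|h|\le h_0$, $\mathcal I_h(A):=\frac1{kU}\sum_{n\ge0}(\frac h{kU})^n\mathrm{ad}^{\,n}_{M_\Lambda}(A)$. *)

theory Defs
  imports "HOL-Complex_Analysis.Complex_Analysis"
begin

text \<open>A site of the torus (Z/LZ)^d is a list of length d with entries in {0..<L};
  a mode is a site together with a spin (True = up, False = down).
  The occupation-number basis of Fock space is indexed by finite sets of modes.
  Operators are represented by their matrices in this basis:
  B S T = matrix element between basis vectors S (row) and T (column).\<close>

type_synonym site = "nat list"
type_synonym mode = "site \<times> bool"
type_synonym fop = "mode set \<Rightarrow> mode set \<Rightarrow> complex"

definition sites :: "nat \<Rightarrow> nat \<Rightarrow> site set" where
  "sites d L = {x. length x = d \<and> (\<forall>i<d. x ! i < L)}"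

definition modes :: "nat \<Rightarrow> nat \<Rightarrow> mode set" where
  "modes d L = sites d L \<times> UNIV"

definition configs :: "nat \<Rightarrow> nat \<Rightarrow> mode set set" where
  "configs d L = Pow (modes d L)"

text \<open>Linear ordering of modes used for the Jordan-Wigner signs.\<close>
definition mode_index :: "nat \<Rightarrow> mode \<Rightarrow> nat" where
  "mode_index L j = 2 * (\<Sum>i<length (fst j). fst j ! i * L ^ i) + (if snd j then 0 else 1)"

definition op_id :: "nat \<Rightarrow> nat \<Rightarrow> fop" where
  "op_id d L S T = (if S = T \<and> S \<in> configs d L then 1 else 0)"

definition op_mult :: "nat \<Rightarrow> nat \<Rightarrow> fop \<Rightarrow> fop \<Rightarrow> fop" where
  "op_mult d L A B S T = (\<Sum>R\<in>configs d L. A S R * B R T)"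

definition op_comm :: "nat \<Rightarrow> nat \<Rightarrow> fop \<Rightarrow> fop \<Rightarrow> fop" where
  "op_comm d L A B = (\<lambda>S T. op_mult d L A B S T - op_mult d L B A S T)"

definition cre :: "nat \<Rightarrow> nat \<Rightarrow> mode \<Rightarrow> fop" where
  "cre d L j S T =
     (if T \<in> configs d L \<and> j \<in> modes d L \<and> j \<notin> T \<and> S = insert j T
      then (-1) ^ card {i\<in>T. mode_index L i < mode_index L j} else 0)"

definition ann :: "nat \<Rightarrow> nat \<Rightarrow> mode \<Rightarrow> fop" where
  "ann d L j S T = cnj (cre d L j T S)"

definition num :: "nat \<Rightarrow> nat \<Rightarrow> mode \<Rightarrow> fop" where
  "num d L j = op_mult d L (cre d L j) (ann d L j)"

definition Dop :: "nat \<Rightarrow> nat \<Rightarrow> fop" where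
  "Dop d L = (\<lambda>S T. \<Sum>x\<in>sites d L. op_mult d L (num d L (x, True)) (num d L (x, False)) S T)"

definition eta :: "site \<Rightarrow> complex" where
  "eta x = (-1) ^ sum_list x"

definition Mop :: "nat \<Rightarrow> nat \<Rightarrow> fop" where
  "Mop d L = (\<lambda>S T. \<Sum>x\<in>sites d L.
      eta x * (num d L (x, True) S T - num d L (x, False) S T) / 2)"

definition Nop :: "nat \<Rightarrow> nat \<Rightarrow> fop" where
  "Nop d L = (\<lambda>S T. \<Sum>x\<in>sites d L. num d L (x, True) S T + num d L (x, False) S T)"

text \<open>Half-filled subspace: kernel of N - |Lambda| (N is diagonal in the occupation basis),
  and the orthogonal projection onto it.\<close>
definition hf_configs :: "nat \<Rightarrow> nat \<Rightarrow> mode set set" where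
  "hf_configs d L = {S\<in>configs d L. Nop d L S S = of_nat (card (sites d L))}"

definition P_hf :: "nat \<Rightarrow> nat \<Rightarrow> fop" where
  "P_hf d L S T = (if S = T \<and> S \<in> hf_configs d L then 1 else 0)"

text \<open>A regarded as an operator on the half-filled space.\<close>
definition compress :: "nat \<Rightarrow> nat \<Rightarrow> fop \<Rightarrow> fop" where
  "compress d L A = op_mult d L (P_hf d L) (op_mult d L A (P_hf d L))"

definition P_D :: "nat \<Rightarrow> nat \<Rightarrow> int \<Rightarrow> fop" where
  "P_D d L m S T = (if S = T \<and> S \<in> hf_configs d L \<and> Dop d L S S = of_int m then 1 else 0)"

text \<open>Grade k: A = sum_m P_{m+k} A P_m (m ranges over all eigenvalues 0..|Lambda| of D).\<close>
definition has_grade :: "nat \<Rightarrow> nat \<Rightarrow> int \<Rightarrow> fop \<Rightarrow> bool" where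
  "has_grade d L k A \<longleftrightarrow>
     compress d L A = (\<lambda>S T. \<Sum>m\<in>{0..int (card (sites d L))}.
        op_mult d L (P_D d L (m + k)) (op_mult d L A (P_D d L m)) S T)"

inductive_set loc_alg :: "nat \<Rightarrow> nat \<Rightarrow> site set \<Rightarrow> fop set" for d L X where
  unit: "op_id d L \<in> loc_alg d L X"
| cre: "x \<in> X \<Longrightarrow> cre d L (x, \<sigma>) \<in> loc_alg d L X"
| ann: "x \<in> X \<Longrightarrow> ann d L (x, \<sigma>) \<in> loc_alg d L X"
| add: "A \<in> loc_alg d L X \<Longrightarrow> B \<in> loc_alg d L X \<Longrightarrow> (\<lambda>S T. A S T + B S T) \<in> loc_alg d L X"
| smult: "A \<in> loc_alg d L X \<Longrightarrow> (\<lambda>S T. c * A S T) \<in> loc_alg d L X"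
| mult: "A \<in> loc_alg d L X \<Longrightarrow> B \<in> loc_alg d L X \<Longrightarrow> op_mult d L A B \<in> loc_alg d L X"

definition op_norm :: "nat \<Rightarrow> nat \<Rightarrow> fop \<Rightarrow> real" where
  "op_norm d L B = Sup {sqrt (\<Sum>S\<in>configs d L. (cmod (\<Sum>T\<in>configs d L. B S T * v T))\<^sup>2) | v.
        (\<Sum>T\<in>configs d L. (cmod (v T))\<^sup>2) \<le> 1}"

definition ad_M :: "nat \<Rightarrow> nat \<Rightarrow> fop \<Rightarrow> fop" where
  "ad_M d L A = op_comm d L (Mop d L) A"

definition I_op :: "nat \<Rightarrow> nat \<Rightarrow> int \<Rightarrow> real \<Rightarrow> complex \<Rightarrow> fop \<Rightarrow> fop" where
  "I_op d L k U h A = (\<lambda>S T. (1 / (of_int k * of_real U)) *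
      (\<Sum>n. (h / (of_int k * of_real U)) ^ n * ((ad_M d L ^^ n) A) S T))"

end

theory Submission imports Defs begin

definition vn :: "'a set \<Rightarrow> ('a \<Rightarrow> complex) \<Rightarrow> real" where
  "vn C v = L2_set (\<lambda>T. cmod (v T)) C"
definition app :: "'a set \<Rightarrow> ('a \<Rightarrow> 'a \<Rightarrow> complex) \<Rightarrow> ('a \<Rightarrow> complex) \<Rightarrow> 'a \<Rightarrow> complex" where
  "app C B v = (\<lambda>S. \<Sum>T\<in>C. B S T * v T)"
definition onrm :: "'a set \<Rightarrow> ('a \<Rightarrow> 'a \<Rightarrow> complex) \<Rightarrow> real" where
  "onrm C B = Sup {vn C (app C B v) | v. vn C v \<le> 1}"

lemma op_norm_onrm: "op_norm d L B = onrm (configs d L) B"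
proof -
  have "{sqrt (\<Sum>S\<in>configs d L. (cmod (\<Sum>T\<in>configs d L. B S T * v T))\<^sup>2) | v.
        (\<Sum>T\<in>configs d L. (cmod (v T))\<^sup>2) \<le> 1} = {vn (configs d L) (app (configs d L) B v) | v. vn (configs d L) v \<le> 1}"
    unfolding vn_def app_def L2_set_def by simp
  then show ?thesis unfolding op_norm_def onrm_def by simp
qed

lemma vn_entry: "finite C \<Longrightarrow> T \<in> C \<Longrightarrow> cmod (v T) \<le> vn C v"
  unfolding vn_def by (rule member_le_L2_set) auto

lemma app_bound:
  assumes "finite C"
  shows "vn C (app C B v) \<le> (\<Sum>S\<in>C. \<Sum>T\<in>C. cmod (B S T)) * vn C v"
proof -
  have "vn C (app C B v) \<le> (\<Sum>S\<in>C. cmod (app C B v S))"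
    unfolding vn_def by (rule L2_set_le_sum) auto
  also have "\<dots> \<le> (\<Sum>S\<in>C. (\<Sum>T\<in>C. cmod (B S T)) * vn C v)"
  proof (rule sum_mono)
    fix S assume "S \<in> C"
    have "cmod (app C B v S) \<le> (\<Sum>T\<in>C. cmod (B S T * v T))"
      unfolding app_def by (rule norm_sum)
    also have "\<dots> \<le> (\<Sum>T\<in>C. cmod (B S T) * vn C v)"
      by (rule sum_mono) (simp add: norm_mult mult_left_mono vn_entry assms)
    finally show "cmod (app C B v S) \<le> (\<Sum>T\<in>C. cmod (B S T)) * vn C v"
      by (simp add: sum_distrib_right)
  qed
  finally show ?thesis by (simp add: sum_distrib_right)
qed

lemma onrm_set_bdd:
  assumes "finite C"
  shows "bdd_above {vn C (app C B v) | v. vn C v \<le> 1}"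
proof (rule bdd_aboveI[where M = "\<Sum>S\<in>C. \<Sum>T\<in>C. cmod (B S T)"])
  fix x assume "x \<in> {vn C (app C B v) | v. vn C v \<le> 1}"
  then obtain v where x: "x = vn C (app C B v)" and v: "vn C v \<le> 1" by auto
  have "x \<le> (\<Sum>S\<in>C. \<Sum>T\<in>C. cmod (B S T)) * vn C v" using app_bound[OF assms] x by simp
  also have "\<dots> \<le> (\<Sum>S\<in>C. \<Sum>T\<in>C. cmod (B S T))"
    using v by (intro mult_left_le) (auto intro!: sum_nonneg)
  finally show "x \<le> (\<Sum>S\<in>C. \<Sum>T\<in>C. cmod (B S T))" .
qed

lemma vn_zero: "vn C (\<lambda>_. 0) = 0" unfolding vn_def L2_set_def by simp

lemma app_zero: "app C B (\<lambda>_. 0) = (\<lambda>_. 0)" unfolding app_def by simp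

lemma onrm_upper: "finite C \<Longrightarrow> vn C v \<le> 1 \<Longrightarrow> vn C (app C B v) \<le> onrm C B"
  unfolding onrm_def by (rule cSup_upper) (auto intro: onrm_set_bdd)

lemma onrm_nonneg: "finite C \<Longrightarrow> 0 \<le> onrm C B"
  using onrm_upper[of C "\<lambda>_. 0" B] by (simp add: vn_zero app_zero)

lemma vn_scale: "vn C (\<lambda>T. c * v T) = cmod c * vn C v"
  unfolding vn_def by (simp add: norm_mult L2_set_right_distrib)

lemma app_scale: "app C B (\<lambda>T. c * v T) = (\<lambda>S. c * app C B v S)"
  unfolding app_def by (auto simp: sum_distrib_left intro!: sum.cong)

lemma onrm_bound:
  assumes "finite C"
  shows "vn C (app C B v) \<le> onrm C B * vn C v"
proof (cases "vn C v = 0")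
  case True
  then have "\<forall>T\<in>C. v T = 0" unfolding vn_def using assms by (simp add: L2_set_eq_0_iff)
  then have "app C B v = (\<lambda>_. 0)" unfolding app_def by simp
  then show ?thesis using True by (simp add: vn_zero)
next
  case False
  define c where "c = vn C v"
  have cpos: "c > 0" using False c_def unfolding vn_def by (simp add: less_le)
  define w where "w = (\<lambda>T. complex_of_real (1 / c) * v T)"
  have "vn C w = 1" unfolding w_def vn_scale using cpos c_def by (simp add: norm_divide)
  then have "vn C (app C B w) \<le> onrm C B" using onrm_upper[OF assms, of w B] by simp
  moreover have "vn C (app C B w) = vn C (app C B v) / c"
    unfolding w_def app_scale vn_scale using cpos by (simp add: norm_divide)
  ultimately show ?thesis using cpos c_def by (simp add: divide_le_eq mult.commute)
qed

lemma onrm_least: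
  assumes "\<And>v. vn C v \<le> 1 \<Longrightarrow> vn C (app C B v) \<le> K"
  shows "onrm C B \<le> K"
  unfolding onrm_def
proof (rule cSup_least)
  have "vn C (app C B (\<lambda>_. 0)) \<in> {vn C (app C B v) | v. vn C v \<le> 1}" using vn_zero by (metis (mono_tags, lifting) mem_Collect_eq order.refl zero_le_one)
  then show "{vn C (app C B v) | v. vn C v \<le> 1} \<noteq> {}" by blast
qed (use assms in auto)


lemma vn_add: "vn C (\<lambda>S. x S + y S) \<le> vn C x + vn C y"
proof -
  have "vn C (\<lambda>S. x S + y S) \<le> L2_set (\<lambda>S. cmod (x S) + cmod (y S)) C"
    unfolding vn_def by (rule L2_set_mono) (auto simp: norm_triangle_ineq)
  also have "\<dots> \<le> vn C x + vn C y" unfolding vn_def by (rule L2_set_triangle_ineq)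
  finally show ?thesis .
qed

lemma vn_diff: "vn C (\<lambda>S. x S - y S) \<le> vn C x + vn C y"
proof -
  have "vn C (\<lambda>S. x S - y S) \<le> L2_set (\<lambda>S. cmod (x S) + cmod (y S)) C"
    unfolding vn_def by (rule L2_set_mono) (auto simp: norm_triangle_ineq4)
  also have "\<dots> \<le> vn C x + vn C y" unfolding vn_def by (rule L2_set_triangle_ineq)
  finally show ?thesis .
qed

lemma vn_sum: "finite N \<Longrightarrow> vn C (\<lambda>S. \<Sum>n\<in>N. g n S) \<le> (\<Sum>n\<in>N. vn C (g n))"
proof (induction N rule: finite_induct)
  case empty
  then show ?case using vn_zero[of C] by simp
next
  case (insert a N)
  have "vn C (\<lambda>S. \<Sum>n\<in>insert a N. g n S) = vn C (\<lambda>S. g a S + (\<Sum>n\<in>N. g n S))"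
    using insert by simp
  also have "\<dots> \<le> vn C (g a) + vn C (\<lambda>S. \<Sum>n\<in>N. g n S)" by (rule vn_add)
  also have "\<dots> \<le> vn C (g a) + (\<Sum>n\<in>N. vn C (g n))" using insert by simp
  finally show ?case using insert by simp
qed

lemma vn_nonneg: "0 \<le> vn C v" unfolding vn_def by simp

lemma onrm_lmul:
  assumes "finite C" "0 \<le> F" "\<And>S. S \<in> C \<Longrightarrow> cmod (f S) \<le> F"
  shows "onrm C (\<lambda>S T. f S * B S T) \<le> F * onrm C B"
proof (rule onrm_least)
  fix v assume v: "vn C v \<le> 1"
  have "app C (\<lambda>S T. f S * B S T) v = (\<lambda>S. f S * app C B v S)"
    unfolding app_def by (rule ext) (simp add: sum_distrib_left mult.assoc)
  then have "vn C (app C (\<lambda>S T. f S * B S T) v) = L2_set (\<lambda>S. cmod (f S) * cmod (app C B v S)) C"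
    unfolding vn_def by (simp add: norm_mult)
  also have "\<dots> \<le> L2_set (\<lambda>S. F * cmod (app C B v S)) C"
    by (rule L2_set_mono) (auto intro: mult_right_mono assms)
  also have "\<dots> = F * vn C (app C B v)" unfolding vn_def using assms by (simp add: L2_set_right_distrib)
  also have "\<dots> \<le> F * (onrm C B * vn C v)" using onrm_bound[OF assms(1)] assms by (simp add: mult_left_mono)
  also have "\<dots> \<le> F * onrm C B"
    using v assms onrm_nonneg[OF assms(1), of B] vn_nonneg[of C v]
    by (simp add: mult_left_mono mult_left_le)
  finally show "vn C (app C (\<lambda>S T. f S * B S T) v) \<le> F * onrm C B" .
qed

lemma onrm_rmul:
  assumes "finite C" "0 \<le> F" "\<And>S. S \<in> C \<Longrightarrow> cmod (f S) \<le> F"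
  shows "onrm C (\<lambda>S T. B S T * f T) \<le> onrm C B * F"
proof (rule onrm_least)
  fix v assume v: "vn C v \<le> 1"
  have "app C (\<lambda>S T. B S T * f T) v = app C B (\<lambda>T. f T * v T)"
    unfolding app_def by (rule ext) (simp add: mult.assoc)
  moreover have "vn C (\<lambda>T. f T * v T) \<le> F * vn C v"
  proof -
    have "vn C (\<lambda>T. f T * v T) \<le> L2_set (\<lambda>T. F * cmod (v T)) C"
      unfolding vn_def by (rule L2_set_mono) (auto simp: norm_mult intro: mult_right_mono assms)
    then show ?thesis unfolding vn_def using assms by (simp add: L2_set_right_distrib)
  qed
  ultimately have "vn C (app C (\<lambda>S T. B S T * f T) v) \<le> onrm C B * (F * vn C v)"
    using onrm_bound[OF assms(1), of B "\<lambda>T. f T * v T"] onrm_nonneg[OF assms(1), of B]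
    using order_trans[OF onrm_bound[OF assms(1), of B "\<lambda>T. f T * v T"] mult_left_mono[OF \<open>vn C (\<lambda>T. f T * v T) \<le> F * vn C v\<close> onrm_nonneg[OF assms(1), of B]]] by simp
  also have "\<dots> \<le> onrm C B * F"
    using v assms onrm_nonneg[OF assms(1), of B] vn_nonneg[of C v]
    by (simp add: mult_left_mono mult_left_le)
  finally show "vn C (app C (\<lambda>S T. B S T * f T) v) \<le> onrm C B * F" .
qed

lemma onrm_diff:
  assumes "finite C"
  shows "onrm C (\<lambda>S T. B1 S T - B2 S T) \<le> onrm C B1 + onrm C B2"
proof (rule onrm_least)
  fix v assume v: "vn C v \<le> 1"
  have "app C (\<lambda>S T. B1 S T - B2 S T) v = (\<lambda>S. app C B1 v S - app C B2 v S)"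
    unfolding app_def by (rule ext) (simp add: left_diff_distrib sum_subtractf)
  then have "vn C (app C (\<lambda>S T. B1 S T - B2 S T) v) \<le> vn C (app C B1 v) + vn C (app C B2 v)"
    using vn_diff[of C "app C B1 v" "app C B2 v"] by simp
  also have "\<dots> \<le> onrm C B1 + onrm C B2"
    using onrm_upper[OF assms v] by (simp add: add_mono)
  finally show "vn C (app C (\<lambda>S T. B1 S T - B2 S T) v) \<le> onrm C B1 + onrm C B2" .
qed

lemma onrm_pow:
  assumes "finite C" "0 \<le> F" "\<And>S. S \<in> C \<Longrightarrow> cmod (m S) \<le> F"
  shows "onrm C (\<lambda>S T. (m S - m T) ^ n * B S T) \<le> (2 * F) ^ n * onrm C B"
proof (induction n)
  case 0
  then show ?case by simp
next
  case (Suc n)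
  define E where "E = (\<lambda>S T. (m S - m T) ^ n * B S T)"
  have "(\<lambda>S T. (m S - m T) ^ Suc n * B S T) = (\<lambda>S T. m S * E S T - E S T * m T)"
    unfolding E_def by (intro ext) (simp add: power_Suc left_diff_distrib right_diff_distrib mult_ac)
  then have "onrm C (\<lambda>S T. (m S - m T) ^ Suc n * B S T) \<le> onrm C (\<lambda>S T. m S * E S T) + onrm C (\<lambda>S T. E S T * m T)"
    using onrm_diff[OF assms(1), of "\<lambda>S T. m S * E S T" "\<lambda>S T. E S T * m T"] by simp
  also have "\<dots> \<le> F * onrm C E + onrm C E * F"
    by (rule add_mono[OF onrm_lmul[OF assms] onrm_rmul[OF assms]])
  also have "\<dots> = 2 * F * onrm C E" by simp
  also have "\<dots> \<le> 2 * F * ((2 * F) ^ n * onrm C B)"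
    using Suc assms unfolding E_def by (intro mult_left_mono) auto
  finally show ?case by simp
qed

lemma onrm_series:
  assumes C: "finite C"
    and sums: "\<And>S T. (\<lambda>n. a n * E n S T) sums D S T"
    and b: "\<And>n. onrm C (E n) \<le> b n"
    and K: "(\<lambda>n. cmod (a n) * b n) sums K"
  shows "onrm C D \<le> K"
proof (rule onrm_least)
  fix v assume v: "vn C v \<le> 1"
  define DN where "DN N = (\<lambda>S. \<Sum>n<N. a n * app C (E n) v S)" for N
  have conv: "(\<lambda>N. DN N S) \<longlonglongrightarrow> app C D v S" for S
  proof -
    have eq: "DN N S = (\<Sum>T\<in>C. (\<Sum>n<N. a n * E n S T) * v T)" for N
    proof -
      have "DN N S = (\<Sum>n<N. \<Sum>T\<in>C. a n * E n S T * v T)" unfolding DN_def app_def by (simp add: sum_distrib_left mult.assoc)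
      also have "\<dots> = (\<Sum>T\<in>C. \<Sum>n<N. a n * E n S T * v T)" by (rule sum.swap)
      also have "\<dots> = (\<Sum>T\<in>C. (\<Sum>n<N. a n * E n S T) * v T)" by (simp add: sum_distrib_right)
      finally show ?thesis .
    qed
    have "(\<lambda>N. \<Sum>T\<in>C. (\<Sum>n<N. a n * E n S T) * v T) \<longlonglongrightarrow> (\<Sum>T\<in>C. D S T * v T)"
      using sums unfolding sums_def by (intro tendsto_intros) auto
    then show ?thesis unfolding eq app_def .
  qed
  have lim: "(\<lambda>N. vn C (DN N)) \<longlonglongrightarrow> vn C (app C D v)"
    unfolding vn_def L2_set_def by (intro tendsto_real_sqrt tendsto_sum tendsto_power tendsto_norm conv)
  have bnd: "vn C (DN N) \<le> K" for N
  proof -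
    have "vn C (DN N) \<le> (\<Sum>n<N. vn C (\<lambda>S. a n * app C (E n) v S))"
      unfolding DN_def by (rule vn_sum) simp
    also have "\<dots> = (\<Sum>n<N. cmod (a n) * vn C (app C (E n) v))"
      by (simp add: vn_scale)
    also have "\<dots> \<le> (\<Sum>n<N. cmod (a n) * b n)"
    proof (rule sum_mono)
      fix n
      have "vn C (app C (E n) v) \<le> onrm C (E n) * vn C v" by (rule onrm_bound[OF C])
      also have "\<dots> \<le> onrm C (E n)" using v onrm_nonneg[OF C, of "E n"] vn_nonneg[of C v]
        by (simp add: mult_left_le)
      also have "\<dots> \<le> b n" by (rule b)
      finally show "cmod (a n) * vn C (app C (E n) v) \<le> cmod (a n) * b n"
        by (simp add: mult_left_mono)
    qed
    also have "\<dots> \<le> K"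
    proof -
      have "\<And>n. 0 \<le> cmod (a n) * b n"
        using b onrm_nonneg[OF C] by (metis norm_ge_zero order_trans zero_le_mult_iff)
      then show ?thesis using K sum_le_suminf[of "\<lambda>n. cmod (a n) * b n" "{..<N}"]
        by (auto simp: sums_iff)
    qed
    finally show ?thesis .
  qed
  show "vn C (app C D v) \<le> K"
    by (rule tendsto_le[OF _ tendsto_const lim]) (use bnd in auto)
qed


lemma finite_sites: "finite (sites d L)"
proof (rule finite_subset)
  show "sites d L \<subseteq> {xs. set xs \<subseteq> {..<L} \<and> length xs = d}"
    unfolding sites_def by (auto simp: in_set_conv_nth)
  show "finite {xs. set xs \<subseteq> {..<L} \<and> length xs = d}"
    by (rule finite_lists_length_eq) simp
qed

lemma finite_modes: "finite (modes d L)"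
  unfolding modes_def using finite_sites by simp

lemma finite_configs: "finite (configs d L)"
  unfolding configs_def using finite_modes by simp

lemma hf_sub: "hf_configs d L \<subseteq> configs d L"
  unfolding hf_configs_def by auto

lemma mult_P_left: "op_mult d L (P_hf d L) Y S T = (if S \<in> hf_configs d L then Y S T else 0)"
proof -
  have "op_mult d L (P_hf d L) Y S T = (\<Sum>R\<in>configs d L. if S = R then (if S \<in> hf_configs d L then Y S T else 0) else 0)"
    unfolding op_mult_def P_hf_def by (rule sum.cong) auto
  also have "\<dots> = (if S \<in> hf_configs d L then Y S T else 0)"
    using finite_configs[of d L] hf_sub[of d L] by auto
  finally show ?thesis .
qed

lemma mult_P_right: "op_mult d L Y (P_hf d L) S T = (if T \<in> hf_configs d L then Y S T else 0)"
proof -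
  have "op_mult d L Y (P_hf d L) S T = (\<Sum>R\<in>configs d L. if T = R then (if T \<in> hf_configs d L then Y S T else 0) else 0)"
    unfolding op_mult_def P_hf_def by (rule sum.cong) auto
  also have "\<dots> = (if T \<in> hf_configs d L then Y S T else 0)"
    using finite_configs[of d L] hf_sub[of d L] by auto
  finally show ?thesis .
qed

lemma compress_eq: "compress d L A S T = (if S \<in> hf_configs d L \<and> T \<in> hf_configs d L then A S T else 0)"
  unfolding compress_def mult_P_left mult_P_right by simp

lemma cre_nz: "cre d L j S R \<noteq> 0 \<Longrightarrow> R \<in> configs d L \<and> j \<in> modes d L \<and> j \<notin> R \<and> S = insert j R"
  unfolding cre_def by (auto split: if_splits)

lemma sgn_sq: "(-1::complex) ^ n * cnj ((-1) ^ n) = 1"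
  by (induction n) auto

lemma num_eq: "num d L j S T = (if S = T \<and> S \<in> configs d L \<and> j \<in> S \<and> j \<in> modes d L then 1 else 0)"
proof -
  define c where "c = (if S = T \<and> S \<in> configs d L \<and> j \<in> S \<and> j \<in> modes d L then 1 else (0::complex))"
  have trm: "cre d L j S R * cnj (cre d L j T R) = (if S - {j} = R then c else 0)" if R: "R \<in> configs d L" for R
  proof (cases "S = T \<and> S \<in> configs d L \<and> j \<in> S \<and> j \<in> modes d L")
    case True
    then show ?thesis
    proof (cases "S - {j} = R")
      case True2: True
      then have "R \<in> configs d L" "j \<notin> R" "S = insert j R" using True True2 R by auto
      then have "cre d L j S R = (-1) ^ card {i\<in>R. mode_index L i < mode_index L j}"
        using True unfolding cre_def by simp
      moreover have "T = S" using True by simp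
      ultimately have "cre d L j S R * cnj (cre d L j T R) = 1" by (simp only: sgn_sq)
      moreover have "c = 1" unfolding c_def by (rule if_P[OF True])
      moreover have "(if S - {j} = R then c else 0) = c" by (rule if_P[OF True2])
      ultimately show ?thesis by simp
    next
      case False
      then have "cre d L j S R = 0" using True by (auto dest: cre_nz)
      then show ?thesis using False by simp
    qed
  next
    case False
    have "cre d L j S R * cnj (cre d L j T R) = 0"
    proof (rule ccontr)
      assume "cre d L j S R * cnj (cre d L j T R) \<noteq> 0"
      then have a: "cre d L j S R \<noteq> 0" and b: "cre d L j T R \<noteq> 0" by auto
      from cre_nz[OF a] cre_nz[OF b] have "S = T" "S \<in> configs d L" "j \<in> S" "j \<in> modes d L"
        unfolding configs_def by auto
      with False show False by simp
    qed
    moreover have "c = 0" unfolding c_def using False by auto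
    ultimately show ?thesis by simp
  qed
  have "num d L j S T = (\<Sum>R\<in>configs d L. if S - {j} = R then c else 0)"
    unfolding num_def op_mult_def ann_def by (rule sum.cong) (auto simp: trm)
  also have "\<dots> = (if S - {j} \<in> configs d L then c else 0)"
    using finite_configs by simp
  also have "\<dots> = c" unfolding c_def configs_def by auto
  finally show ?thesis unfolding c_def .
qed

definition mterm :: "mode set \<Rightarrow> site \<Rightarrow> complex" where
  "mterm S x = eta x * ((if (x, True) \<in> S then 1 else 0) - (if (x, False) \<in> S then 1 else 0)) / 2"

definition mpr :: "nat \<Rightarrow> nat \<Rightarrow> mode set \<Rightarrow> complex" where
  "mpr d L S = (if S \<in> configs d L then \<Sum>x\<in>sites d L. mterm S x else 0)"

lemma Mop_diag: "Mop d L S S = mpr d L S"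
proof (cases "S \<in> configs d L")
  case True
  have "Mop d L S S = (\<Sum>x\<in>sites d L. mterm S x)"
    unfolding Mop_def
  proof (rule sum.cong)
    fix x assume "x \<in> sites d L"
    then have m: "(x, b) \<in> modes d L" for b unfolding modes_def by simp
    have "num d L (x, b) S S = (if (x, b) \<in> S then 1 else 0)" for b
      unfolding num_eq using True m by simp
    then show "eta x * (num d L (x, True) S S - num d L (x, False) S S) / 2 = mterm S x"
      unfolding mterm_def by simp
  qed simp
  then show ?thesis using True unfolding mpr_def by simp
next
  case False
  have "num d L j S S = 0" for j unfolding num_eq using False by simp
  then have "Mop d L S S = (\<Sum>x\<in>sites d L. 0)"
    unfolding Mop_def by simp
  then show ?thesis using False unfolding mpr_def by simp
qed

lemma Mop_off: "S \<noteq> T \<Longrightarrow> Mop d L S T = 0"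
proof -
  assume ST: "S \<noteq> T"
  have "num d L j S T = 0" for j unfolding num_eq using ST by simp
  then show ?thesis unfolding Mop_def by simp
qed

lemma Mop_eq: "Mop d L S T = (if S = T then mpr d L S else 0)"
  using Mop_diag Mop_off by (cases "S = T") auto

lemma ad_M_eq: "ad_M d L C S T = (mpr d L S - mpr d L T) * C S T"
proof -
  have 1: "op_mult d L (Mop d L) C S T = mpr d L S * C S T"
  proof -
    have "op_mult d L (Mop d L) C S T = (\<Sum>R\<in>configs d L. if S = R then mpr d L S * C S T else 0)"
      unfolding op_mult_def Mop_eq by (rule sum.cong) auto
    also have "\<dots> = mpr d L S * C S T" using finite_configs by (simp add: mpr_def)
    finally show ?thesis .
  qed
  have 2: "op_mult d L C (Mop d L) S T = C S T * mpr d L T"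
  proof -
    have "op_mult d L C (Mop d L) S T = (\<Sum>R\<in>configs d L. if T = R then C S T * mpr d L T else 0)"
      unfolding op_mult_def Mop_eq by (rule sum.cong) auto
    also have "\<dots> = C S T * mpr d L T" using finite_configs by (simp add: mpr_def)
    finally show ?thesis .
  qed
  show ?thesis unfolding ad_M_def op_comm_def 1 2 by (simp add: algebra_simps)
qed

lemma ad_M_pow: "(ad_M d L ^^ n) C S T = (mpr d L S - mpr d L T) ^ n * C S T"
  by (induction n arbitrary: S T) (simp_all add: ad_M_eq)

lemma loc_alg_local:
  assumes "A \<in> loc_alg d L X"
  shows "A S T \<noteq> 0 \<Longrightarrow> S - {j. fst j \<in> X} = T - {j. fst j \<in> X}"
  using assms
proof (induction arbitrary: S T rule: loc_alg.induct)
  case unit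
  then show ?case unfolding op_id_def by (auto split: if_splits)
next
  case (cre x \<sigma>)
  then show ?case by (auto dest!: cre_nz)
next
  case (ann x \<sigma>)
  then have "cre d L (x, \<sigma>) T S \<noteq> 0" unfolding ann_def by auto
  then show ?case using ann by (auto dest!: cre_nz)
next
  case (add A B)
  then have "A S T \<noteq> 0 \<or> B S T \<noteq> 0" by auto
  then show ?case using add.IH by blast
next
  case (smult A c)
  then show ?case by auto
next
  case (mult A B)
  then obtain R where "A S R * B R T \<noteq> 0" unfolding op_mult_def by (meson sum.not_neutral_contains_not_neutral)
  then have "A S R \<noteq> 0" "B R T \<noteq> 0" by auto
  then show ?case using mult.IH by metis
qed

definition mX :: "site set \<Rightarrow> mode set \<Rightarrow> complex" where
  "mX X S = (\<Sum>x\<in>X. mterm S x)"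

lemma mterm_bound: "cmod (mterm S x) \<le> 1 / 2"
  unfolding mterm_def eta_def by (auto simp: norm_mult norm_divide norm_power)

lemma mX_bound: "cmod (mX X S) \<le> real (card X) / 2"
proof -
  have "cmod (mX X S) \<le> (\<Sum>x\<in>X. cmod (mterm S x))" unfolding mX_def by (rule norm_sum)
  also have "\<dots> \<le> real (card X) * (1 / 2)" by (rule sum_bounded_above) (rule mterm_bound)
  finally show ?thesis by simp
qed

lemma mpr_local:
  assumes "X \<subseteq> sites d L" "S \<in> configs d L" "T \<in> configs d L"
    and loc: "S - {j. fst j \<in> X} = T - {j. fst j \<in> X}"
  shows "mpr d L S - mpr d L T = mX X S - mX X T"
proof -
  have eqt: "mterm S x = mterm T x" if "x \<notin> X" for x
  proof -
    have "(x, b) \<in> S \<longleftrightarrow> (x, b) \<in> T" for b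
    proof -
      have "(x, b) \<in> S - {j. fst j \<in> X} \<longleftrightarrow> (x, b) \<in> T - {j. fst j \<in> X}" using loc by simp
      then show ?thesis using that by simp
    qed
    then show ?thesis unfolding mterm_def by simp
  qed
  have sp: "(\<Sum>x\<in>sites d L. mterm U x) = (\<Sum>x\<in>sites d L - X. mterm U x) + mX X U" for U
    unfolding mX_def using sum.subset_diff[OF assms(1) finite_sites] by simp
  have "(\<Sum>x\<in>sites d L - X. mterm S x) = (\<Sum>x\<in>sites d L - X. mterm T x)"
    by (rule sum.cong) (auto simp: eqt)
  then show ?thesis unfolding mpr_def using assms sp[of S] sp[of T] by simp
qed


lemma I_zero: "C P Q = 0 \<Longrightarrow> I_op d L k U h C P Q = 0"
  unfolding I_op_def by (simp add: ad_M_pow)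

lemma I_closed:
  assumes c0: "of_int k * of_real U \<noteq> (0::complex)"
    and lt: "cmod (h * (mpr d L P - mpr d L Q)) < cmod (of_int k * of_real U)"
  shows "I_op d L k U h C P Q = C P Q / (of_int k * of_real U - h * (mpr d L P - mpr d L Q))"
proof -
  define c where "c = (of_int k * of_real U :: complex)"
  define e where "e = mpr d L P - mpr d L Q"
  have cnz: "c \<noteq> 0" using c0 c_def by simp
  have z: "norm (h * e / c) < 1" using lt cnz unfolding c_def e_def by (simp add: norm_divide divide_less_eq)
  have s: "(\<lambda>n. (h * e / c) ^ n * C P Q) sums (1 / (1 - h * e / c) * C P Q)"
    by (rule sums_mult2[OF geometric_sums[OF z]])
  have t: "(h / c) ^ n * ((ad_M d L ^^ n) C P Q) = (h * e / c) ^ n * C P Q" for n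
    unfolding ad_M_pow e_def by (simp add: power_mult_distrib power_divide)
  have "I_op d L k U h C P Q = 1 / c * (\<Sum>n. (h * e / c) ^ n * C P Q)"
    unfolding I_op_def c_def[symmetric] t by simp
  also have "\<dots> = 1 / c * (1 / (1 - h * e / c) * C P Q)" using s by (simp add: sums_iff)
  also have "\<dots> = C P Q / (c - h * e)"
  proof -
    have "c - h * e \<noteq> 0"
    proof
      assume "c - h * e = 0"
      then have "h * e = c" by simp
      then show False using lt unfolding c_def e_def by simp
    qed
    then show ?thesis using cnz by (simp add: field_simps)
  qed
  finally show ?thesis unfolding c_def e_def .
qed


lemma aux_eq:
  fixes c z e b :: complex
  assumes "c \<noteq> 0"
  shows "of_nat (Suc n) * z ^ n / c ^ (n + 2) * (e ^ Suc n * b) = of_nat (Suc n) * (z * e / c) ^ n * (e * b / c\<^sup>2)"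
  using assms by (simp add: power_divide power_mult_distrib power_add field_simps power2_eq_square)

lemma aux_eq2:
  fixes K t x ob :: real
  assumes "K \<noteq> 0"
  shows "real (Suc n) * t ^ n / K ^ (n + 2) * (x ^ Suc n * ob) = real (Suc n) * (t * x / K) ^ n * (x * ob / K\<^sup>2)"
  using assms by (simp add: power_divide power_mult_distrib power_add field_simps power2_eq_square)

theorem lemmaA4:
  fixes d L :: nat and h0 U :: real and k :: int and X :: "site set" and A :: fop
  assumes "d \<ge> 1" and "even L" and "L \<ge> 2"
    and "h0 > 0" and "U > 0" and "k \<noteq> 0"
    and "X \<subseteq> sites d L"
    and "A \<in> loc_alg d L X"
    and "has_grade d L k A"
    and "\<bar>real_of_int k\<bar> * U > h0 * real (card X)"
  shows "(\<exists>S. open S \<and> complex_of_real ` {-h0..h0} \<subseteq> S \<and>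
            (\<forall>P Q. (\<lambda>h. I_op d L k U h (compress d L A) P Q) holomorphic_on S))
       \<and> (\<forall>r::real. \<bar>r\<bar> \<le> h0 \<longrightarrow>
            (\<forall>P Q. ((\<lambda>h. I_op d L k U h (compress d L A) P Q) has_field_derivative
                     I_op d L k U (of_real r)
                       (ad_M d L (I_op d L k U (of_real r) (compress d L A))) P Q)
                   (at (of_real r)))
          \<and> op_norm d L (\<lambda>P Q. deriv (\<lambda>h. I_op d L k U h (compress d L A) P Q) (of_real r))
              \<le> real (card X) / (\<bar>real_of_int k\<bar> * U - \<bar>r\<bar> * real (card X))\<^sup>2
                  * op_norm d L (compress d L A)
          \<and> real (card X) / (\<bar>real_of_int k\<bar> * U - \<bar>r\<bar> * real (card X))\<^sup>2
                  * op_norm d L (compress d L A)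
              \<le> real (card X) / (\<bar>real_of_int k\<bar> * U - h0 * real (card X))\<^sup>2
                  * op_norm d L (compress d L A))"
proof -
  define nX where "nX = real (card X)"
  define Kc where "Kc = \<bar>real_of_int k\<bar> * U"
  define c where "c = (of_int k * of_real U :: complex)"
  define B where "B = compress d L A"
  define \<delta> where "\<delta> = (\<lambda>P Q. mX X P - mX X Q)"
  define Sset where "Sset = {h::complex. cmod h * nX < Kc}"
  have nX0: "0 \<le> nX" unfolding nX_def by simp
  have Kch: "h0 * nX < Kc" using assms(10) unfolding nX_def Kc_def by simp
  have Kcpos: "0 < Kc" using Kch assms(4) nX0 by (smt (verit) mult_nonneg_nonneg)
  have cmodc: "cmod c = Kc" unfolding c_def Kc_def using assms(5) by (simp add: norm_mult)
  have cnz: "c \<noteq> 0" using cmodc Kcpos by auto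
  have dbound: "cmod (\<delta> P Q) \<le> nX" for P Q
  proof -
    have "cmod (\<delta> P Q) \<le> cmod (mX X P) + cmod (mX X Q)" unfolding \<delta>_def by (rule norm_triangle_ineq4)
    also have "\<dots> \<le> nX" using mX_bound[of X P] mX_bound[of X Q] unfolding nX_def by simp
    finally show ?thesis .
  qed
  have locB: "mpr d L P - mpr d L Q = \<delta> P Q" if "B P Q \<noteq> 0" for P Q
  proof -
    have h: "P \<in> hf_configs d L" "Q \<in> hf_configs d L" "A P Q \<noteq> 0"
      using that unfolding B_def compress_eq by (auto split: if_splits)
    have "P - {j. fst j \<in> X} = Q - {j. fst j \<in> X}" by (rule loc_alg_local[OF assms(8) h(3)])
    then show ?thesis unfolding \<delta>_def using mpr_local[OF assms(7)] h hf_sub by blast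
  qed
  have hlt: "cmod (h * \<delta> P Q) < cmod c" if "h \<in> Sset" for h P Q
  proof -
    have "cmod (h * \<delta> P Q) \<le> cmod h * nX" by (simp add: norm_mult dbound mult_left_mono)
    then show ?thesis using that cmodc unfolding Sset_def by simp
  qed
  have dnz: "c - h * \<delta> P Q \<noteq> 0" if "h \<in> Sset" for h P Q
  proof
    assume "c - h * \<delta> P Q = 0"
    then have "h * \<delta> P Q = c" by simp
    then show False using hlt[OF that, of P Q] by simp
  qed
  have closedB: "I_op d L k U h B P Q = B P Q / (c - h * \<delta> P Q)" if "h \<in> Sset" for h P Q
  proof (cases "B P Q = 0")
    case True
    then show ?thesis by (simp add: I_zero)
  next
    case False
    have "I_op d L k U h B P Q = B P Q / (c - h * (mpr d L P - mpr d L Q))"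
      unfolding c_def by (rule I_closed) (use cnz hlt[OF that, of P Q] locB[OF False] in \<open>auto simp: c_def\<close>)
    then show ?thesis using locB[OF False] by simp
  qed
  have openS: "open Sset" unfolding Sset_def
    by (rule open_Collect_less) (auto intro!: continuous_intros)
  have realS: "complex_of_real r \<in> Sset" if "\<bar>r\<bar> \<le> h0" for r
  proof -
    have "\<bar>r\<bar> * nX \<le> h0 * nX" using that nX0 by (rule mult_right_mono)
    then show ?thesis unfolding Sset_def using Kch by simp
  qed
  have hderiv: "((\<lambda>h. I_op d L k U h B P Q) has_field_derivative B P Q * \<delta> P Q / (c - z * \<delta> P Q)\<^sup>2) (at z)"
    if "z \<in> Sset" for z P Q
  proof -
    have "((\<lambda>h. B P Q / (c - h * \<delta> P Q)) has_field_derivative B P Q * \<delta> P Q / (c - z * \<delta> P Q)\<^sup>2) (at z)"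
      using dnz[OF that, of P Q]
      by (auto intro!: derivative_eq_intros simp: power2_eq_square field_simps)
    then show ?thesis
      by (rule has_field_derivative_transform_within_open[OF _ openS that]) (simp add: closedB)
  qed
  show ?thesis
  proof (intro conjI allI impI)
    show "\<exists>S. open S \<and> complex_of_real ` {-h0..h0} \<subseteq> S \<and>
            (\<forall>P Q. (\<lambda>h. I_op d L k U h (compress d L A) P Q) holomorphic_on S)"
    proof (intro exI conjI allI)
      show "open Sset" by (rule openS)
      show "complex_of_real ` {-h0..h0} \<subseteq> Sset" using realS by auto
      fix P Q
      show "(\<lambda>h. I_op d L k U h (compress d L A) P Q) holomorphic_on Sset"
        unfolding B_def[symmetric]
        using hderiv holomorphic_on_open[OF openS] by blast
    qed
  next
    fix r :: real assume r: "\<bar>r\<bar> \<le> h0"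
    define z where "z = complex_of_real r"
    have zS: "z \<in> Sset" unfolding z_def by (rule realS[OF r])
    fix P Q
    have "I_op d L k U z (ad_M d L (I_op d L k U z B)) P Q = B P Q * \<delta> P Q / (c - z * \<delta> P Q)\<^sup>2"
    proof (cases "B P Q = 0")
      case True
      then have "ad_M d L (I_op d L k U z B) P Q = 0" by (simp add: ad_M_eq I_zero)
      then show ?thesis using True by (simp add: I_zero)
    next
      case False
      have "I_op d L k U z (ad_M d L (I_op d L k U z B)) P Q
          = ad_M d L (I_op d L k U z B) P Q / (c - z * (mpr d L P - mpr d L Q))"
        unfolding c_def by (rule I_closed) (use cnz hlt[OF zS, of P Q] locB[OF False] in \<open>auto simp: c_def\<close>)
      also have "\<dots> = \<delta> P Q * (B P Q / (c - z * \<delta> P Q)) / (c - z * \<delta> P Q)"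
        unfolding ad_M_eq locB[OF False] closedB[OF zS] ..
      also have "\<dots> = B P Q * \<delta> P Q / (c - z * \<delta> P Q)\<^sup>2"
        by (simp add: power2_eq_square)
      finally show ?thesis .
    qed
    then show "((\<lambda>h. I_op d L k U h (compress d L A) P Q) has_field_derivative
                     I_op d L k U (of_real r) (ad_M d L (I_op d L k U (of_real r) (compress d L A))) P Q)
                   (at (of_real r))"
      using hderiv[OF zS, of P Q] unfolding B_def z_def by simp
  next
    fix r :: real assume r: "\<bar>r\<bar> \<le> h0"
    define z where "z = complex_of_real r"
    have zS: "z \<in> Sset" unfolding z_def by (rule realS[OF r])
    have Dv: "(\<lambda>P Q. deriv (\<lambda>h. I_op d L k U h B P Q) z) = (\<lambda>P Q. B P Q * \<delta> P Q / (c - z * \<delta> P Q)\<^sup>2)"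
      using hderiv[OF zS] by (intro ext DERIV_imp_deriv)
    define q where "q = \<bar>r\<bar> * nX / Kc"
    have rnX: "\<bar>r\<bar> * nX < Kc" using zS unfolding Sset_def z_def by simp
    have q1: "norm q < 1" using rnX Kcpos nX0 unfolding q_def by (simp add: divide_less_eq)
    have oB0: "0 \<le> onrm (configs d L) B" by (rule onrm_nonneg[OF finite_configs])
    define a where "a = (\<lambda>n. of_nat (Suc n) * z ^ n / c ^ (n + 2))"
    define E where "E = (\<lambda>n P Q. (mX X P - mX X Q) ^ Suc n * B P Q)"
    define b where "b = (\<lambda>n. nX ^ Suc n * onrm (configs d L) B)"
    have "onrm (configs d L) (\<lambda>P Q. B P Q * \<delta> P Q / (c - z * \<delta> P Q)\<^sup>2)
          \<le> nX / (Kc - \<bar>r\<bar> * nX)\<^sup>2 * onrm (configs d L) B"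
    proof (rule onrm_series[OF finite_configs, where a = a and E = E and b = b])
      fix P Q
      define w where "w = z * \<delta> P Q / c"
      have w1: "norm w < 1" using hlt[OF zS, of P Q] cnz cmodc Kcpos unfolding w_def
        by (simp add: norm_divide divide_less_eq)
      have "(\<lambda>n. of_nat (Suc n) * w ^ n * (\<delta> P Q * B P Q / c\<^sup>2)) sums
              (1 / (1 - w)\<^sup>2 * (\<delta> P Q * B P Q / c\<^sup>2))"
        by (rule sums_mult2[OF geometric_deriv_sums[OF w1]])
      moreover have "a n * E n P Q = of_nat (Suc n) * w ^ n * (\<delta> P Q * B P Q / c\<^sup>2)" for n
      proof -
        have "E n P Q = \<delta> P Q ^ Suc n * B P Q" unfolding E_def \<delta>_def by simp
        then show ?thesis unfolding a_def w_def using aux_eq[OF cnz] by simp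
      qed
      moreover have "1 / (1 - w)\<^sup>2 * (\<delta> P Q * B P Q / c\<^sup>2) = B P Q * \<delta> P Q / (c - z * \<delta> P Q)\<^sup>2"
        unfolding w_def using cnz dnz[OF zS, of P Q]
        by (simp add: field_simps power2_eq_square)
      ultimately show "(\<lambda>n. a n * E n P Q) sums (B P Q * \<delta> P Q / (c - z * \<delta> P Q)\<^sup>2)" by simp
    next
      fix n
      have "onrm (configs d L) (E n) \<le> (2 * (nX / 2)) ^ Suc n * onrm (configs d L) B"
        unfolding E_def
        by (rule onrm_pow[OF finite_configs]) (use nX0 mX_bound in \<open>auto simp: nX_def\<close>)
      then show "onrm (configs d L) (E n) \<le> b n" unfolding b_def by simp
    next
      have s1: "(\<lambda>n. real (Suc n) * q ^ n * (nX * onrm (configs d L) B / Kc\<^sup>2)) sums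
              (1 / (1 - q)\<^sup>2 * (nX * onrm (configs d L) B / Kc\<^sup>2))"
        by (rule sums_mult2[OF geometric_deriv_sums[OF q1]])
      have s2: "cmod (a n) * b n = real (Suc n) * q ^ n * (nX * onrm (configs d L) B / Kc\<^sup>2)" for n
      proof -
        have "cmod (a n) = real (Suc n) * \<bar>r\<bar> ^ n / Kc ^ (n + 2)"
          unfolding a_def z_def by (simp only: norm_mult norm_divide norm_power norm_of_nat norm_of_real cmodc)
        then show ?thesis unfolding b_def q_def using aux_eq2[of Kc] Kcpos by simp
      qed
      have s3: "1 / (1 - q)\<^sup>2 * (nX * onrm (configs d L) B / Kc\<^sup>2) = nX / (Kc - \<bar>r\<bar> * nX)\<^sup>2 * onrm (configs d L) B"
        unfolding q_def using Kcpos rnX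
        by (simp add: field_simps power2_eq_square)
      show "(\<lambda>n. cmod (a n) * b n) sums (nX / (Kc - \<bar>r\<bar> * nX)\<^sup>2 * onrm (configs d L) B)"
        unfolding s2 s3[symmetric] by (rule s1)
    qed
    then show "op_norm d L (\<lambda>P Q. deriv (\<lambda>h. I_op d L k U h (compress d L A) P Q) (of_real r))
              \<le> real (card X) / (\<bar>real_of_int k\<bar> * U - \<bar>r\<bar> * real (card X))\<^sup>2
                  * op_norm d L (compress d L A)"
      unfolding op_norm_onrm B_def[symmetric] z_def[symmetric] Dv nX_def[symmetric] Kc_def[symmetric] .
  next
    fix r :: real assume r: "\<bar>r\<bar> \<le> h0"
    have oB0: "0 \<le> op_norm d L (compress d L A)" unfolding op_norm_onrm by (rule onrm_nonneg[OF finite_configs])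
    have p1: "0 < Kc - h0 * nX" using Kch by simp
    have p2: "Kc - h0 * nX \<le> Kc - \<bar>r\<bar> * nX" using r nX0 by (simp add: mult_right_mono)
    have "(Kc - h0 * nX)\<^sup>2 \<le> (Kc - \<bar>r\<bar> * nX)\<^sup>2" using p1 p2 by (simp add: power_mono)
    moreover have "0 < (Kc - h0 * nX)\<^sup>2" using p1 by simp
    ultimately have "nX / (Kc - \<bar>r\<bar> * nX)\<^sup>2 \<le> nX / (Kc - h0 * nX)\<^sup>2"
      using nX0 p1 p2 by (intro divide_left_mono) auto
    then show "real (card X) / (\<bar>real_of_int k\<bar> * U - \<bar>r\<bar> * real (card X))\<^sup>2
                  * op_norm d L (compress d L A)
              \<le> real (card X) / (\<bar>real_of_int k\<bar> * U - h0 * real (card X))\<^sup>2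
                  * op_norm d L (compress d L A)"
      unfolding nX_def[symmetric] Kc_def[symmetric] using oB0 by (rule mult_right_mono)
  qed
qed

end
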